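(* Let $\alpha\in\mathbb{N}_0$. For all $n\in\mathbb{N}$ (i.e. $n\ge1$), $$(\alpha+2)!\,\big[L_{2,x}^{\alpha}+n\big]T_n^{\alpha}(x)=-(n+1)_{\alpha}(\alpha+1)(\alpha+2)\,L_{n-1}^{\alpha+2}(x),$$ $$\big[L_{2\alpha+4,x}^{\alpha}+(n)_{\alpha+2}\big]L_n^{\alpha}(x)=(n+1)_{\alpha}(\alpha+1)(\alpha+2)\,L_{n-1}^{\alpha+2}(x).$$ For $n=0$ both left-hand sides vanish.
   Context: $D_x^i$ is the $i$-fold derivative; $(a)_k$ is the Pochhammer symbol. $L_n^{\gamma}(x)=\frac{(\gamma+1)_n}{n!}{}_1F_1(-n;\gamma+1;x)$ are the Laguerre polynomials. $L_{2,x}^{\alpha}y=xy''+(\alpha+1-x)y'$ and $L_{2\alpha+4,x}^{\alpha}y(x)=(-1)^{\alpha+1}e^x x\,D_x^{\alpha+2}\{e^{-x}D_x^{\alpha+2}[x^{\alpha+1}y(x)]\}$. $T_0^\alpha=0$ and for $n\ge1$, $T_n^{\alpha}(x)=-t_n^{\alpha}\,x\,L_{n-1}^{\alpha+2}(x)$ with $t_n^{\alpha}=(\alpha+2)_{n-1}/n!$. *)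

theory Defs
  imports "HOL-Analysis.Analysis"
begin

definition laguerre :: "real \<Rightarrow> nat \<Rightarrow> real \<Rightarrow> real" where
  "laguerre \<gamma> n x = pochhammer (\<gamma> + 1) n / fact n *
     (\<Sum>k\<le>n. pochhammer (- real n) k / (pochhammer (\<gamma> + 1) k * fact k) * x ^ k)"

definition Dx :: "nat \<Rightarrow> (real \<Rightarrow> real) \<Rightarrow> real \<Rightarrow> real" where
  "Dx i f = ((deriv :: (real \<Rightarrow> real) \<Rightarrow> real \<Rightarrow> real) ^^ i) f"

definition L2op :: "nat \<Rightarrow> (real \<Rightarrow> real) \<Rightarrow> real \<Rightarrow> real" where
  "L2op \<alpha> y x = x * Dx 2 y x + (real \<alpha> + 1 - x) * Dx 1 y x"

definition Lhigh :: "nat \<Rightarrow> (real \<Rightarrow> real) \<Rightarrow> real \<Rightarrow> real" where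
  "Lhigh \<alpha> y x = (-1) ^ (\<alpha> + 1) * exp x * x *
     Dx (\<alpha> + 2) (\<lambda>t. exp (- t) * Dx (\<alpha> + 2) (\<lambda>s. s ^ (\<alpha> + 1) * y s) t) x"

definition tcoef :: "nat \<Rightarrow> nat \<Rightarrow> real" where
  "tcoef \<alpha> n = pochhammer (real \<alpha> + 2) (n - 1) / fact n"

definition Tpoly :: "nat \<Rightarrow> nat \<Rightarrow> real \<Rightarrow> real" where
  "Tpoly \<alpha> n x = (if n = 0 then 0 else - tcoef \<alpha> n * x * laguerre (real \<alpha> + 2) (n - 1) x)"

end

theory Submission imports Defs "HOL-Computational_Algebra.Polynomial" begin

definition cf :: "real \<Rightarrow> nat \<Rightarrow> nat \<Rightarrow> real" where
  "cf g n k = (if k \<le> n then (-1)^k * pochhammer (g + real k + 1) (n - k) / (fact (n - k) * fact k) else 0)"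

definition lagp :: "real \<Rightarrow> nat \<Rightarrow> real poly" where
  "lagp g n = (\<Sum>k\<le>n. monom (cf g n k) k)"

lemma coeff_lagp[simp]: "coeff (lagp g n) k = cf g n k"
  unfolding lagp_def by (auto simp: coeff_sum coeff_monom cf_def)

lemma laguerre_poly:
  assumes "g \<ge> 0"
  shows "laguerre g n x = poly (lagp g n) x"
proof -
  have "laguerre g n x = (\<Sum>k\<le>n. pochhammer (g + 1) n / fact n *
         (pochhammer (- real n) k / (pochhammer (g + 1) k * fact k)) * x ^ k)"
    unfolding laguerre_def by (simp add: sum_distrib_left mult.assoc)
  also have "\<dots> = (\<Sum>k\<le>n. cf g n k * x ^ k)"
  proof (rule sum.cong[OF refl])
    fix k assume "k \<in> {..n}"
    then obtain r where n: "n = k + r" by (auto dest: le_Suc_ex)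
    have p1: "pochhammer (g + 1) n = pochhammer (g+1) k * pochhammer (g + real k + 1) r"
      unfolding n pochhammer_product' by (simp add: add_ac)
    have p2: "pochhammer (- real n) k = (-1)^k * (fact n / fact r)"
    proof -
      have "fact n = (fact r * pochhammer (1 + real r) k :: real)"
        unfolding pochhammer_fact using pochhammer_product'[of "1::real" r k] by (simp add: n add_ac)
      then show ?thesis unfolding pochhammer_minus
        by (simp add: n add_ac)
    qed
    have pos: "pochhammer (g+1) k > 0" using assms by (intro pochhammer_pos) simp
    show "pochhammer (g + 1) n / fact n * (pochhammer (- real n) k / (pochhammer (g + 1) k * fact k)) * x ^ k
        = cf g n k * x ^ k"
      unfolding cf_def p1 p2 using pos by (simp add: n field_simps)
  qed
  also have "\<dots> = poly (lagp g n) x"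
    unfolding lagp_def by (simp add: poly_sum poly_monom)
  finally show ?thesis .
qed
lemma Dx_poly: "Dx i (poly p) = poly ((pderiv^^i) p)"
proof (induction i)
  case 0 then show ?case by (simp add: Dx_def)
next
  case (Suc i)
  have "Dx (Suc i) (poly p) = deriv (Dx i (poly p))" by (simp add: Dx_def)
  also have "\<dots> = poly ((pderiv^^Suc i) p)" unfolding Suc
    by (rule ext) (simp add: DERIV_imp_deriv)
  finally show ?case .
qed

definition Eop :: "real poly \<Rightarrow> real poly" where "Eop q = pderiv q - q"

lemma Dx_exp_poly: "Dx i (\<lambda>t. exp (-t) * poly q t) = (\<lambda>t. exp (-t) * poly ((Eop^^i) q) t)"
proof (induction i)
  case 0 then show ?case by (simp add: Dx_def)
next
  case (Suc i)
  have "Dx (Suc i) (\<lambda>t. exp (-t) * poly q t) = deriv (Dx i (\<lambda>t. exp (-t) * poly q t))" by (simp add: Dx_def)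
  also have "\<dots> = (\<lambda>t. exp (-t) * poly ((Eop^^Suc i) q) t)" unfolding Suc
  proof (rule ext)
    fix t
    have "((\<lambda>t. exp (-t) * poly ((Eop^^i) q) t) has_real_derivative
        (exp (-t) * (-1) * poly ((Eop^^i) q) t + exp (-t) * poly (pderiv ((Eop^^i) q)) t)) (at t)"
      by (auto intro!: derivative_eq_intros)
    then show "deriv (\<lambda>t. exp (-t) * poly ((Eop^^i) q) t) t = exp (-t) * poly ((Eop^^Suc i) q) t"
      by (simp add: DERIV_imp_deriv Eop_def algebra_simps)
  qed
  finally show ?case .
qed

lemma coeff_pderiv_pow: "coeff ((pderiv^^i) p) k = pochhammer (real k + 1) i * coeff p (k+i)"
proof (induction i arbitrary: k)
  case 0 then show ?case by simp
next
  case (Suc i)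
  show ?case by (simp add: coeff_pderiv Suc pochhammer_rec add_ac)
qed

lemma pderiv_pow_diff: "(pderiv^^i) (p - q :: real poly) = (pderiv^^i) p - (pderiv^^i) q"
  by (induction i) (simp_all add: pderiv_diff)
lemma pderiv_pow_smult: "(pderiv^^i) (smult c p :: real poly) = smult c ((pderiv^^i) p)"
  by (induction i) (simp_all add: pderiv_smult)
lemma Eop_pow_diff: "(Eop^^i) (p - q) = (Eop^^i) p - (Eop^^i) q"
  by (induction i) (simp_all add: Eop_def pderiv_diff)
lemma Eop_pow_smult: "(Eop^^i) (smult c p) = smult c ((Eop^^i) p)"
  by (induction i) (simp_all add: Eop_def pderiv_smult smult_diff_right)
lemma Eop_pow_zero: "(Eop^^i) 0 = 0"
  by (induction i) (simp_all add: Eop_def)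

lemma Eop_lagp: "Eop (lagp g j) = - lagp (g + 1) j"
proof (rule poly_eqI)
  fix k
  show "coeff (Eop (lagp g j)) k = coeff (- lagp (g + 1) j) k"
  proof (cases "k \<le> j")
    case False then show ?thesis by (simp add: Eop_def coeff_pderiv cf_def)
  next
    case True
    show ?thesis
    proof (cases "k = j")
      case True then show ?thesis by (simp add: Eop_def coeff_pderiv cf_def)
    next
      case False
      with \<open>k \<le> j\<close> obtain r where j: "j = k + 1 + r" by (metis Suc_eq_plus1 le_Suc_ex le_neq_implies_less Suc_leI)
      have e1: "pochhammer (g + real k + 1) (Suc r) = (g + real k + 1) * pochhammer (g + real k + 2) r"
        by (simp add: pochhammer_rec add_ac)
      have e2: "pochhammer (g + real k + 2) (Suc r) = (g + real k + 2 + real r) * pochhammer (g + real k + 2) r"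
        by (simp add: pochhammer_rec' add_ac)
      have jk: "j - k = Suc r" "j - Suc k = r" using j by auto
      show ?thesis
        apply (simp add: Eop_def coeff_pderiv cf_def jk)
        apply (simp add: j add_ac e1[simplified add_ac] e2[simplified add_ac])
        apply (simp add: divide_simps)
        apply (simp add: algebra_simps)
        done
    qed
  qed
qed

lemma Eop_smult: "Eop (smult c p) = smult c (Eop p)"
  by (simp add: Eop_def pderiv_smult smult_diff_right)

lemma Eop_pow_lagp: "(Eop^^m) (lagp g j) = smult ((-1)^m) (lagp (g + real m) j)"
proof (induction m)
  case 0 then show ?case by simp
next
  case (Suc m)
  show ?case by (simp add: Suc Eop_smult Eop_lagp add_ac)
qed

lemma lagp_split:
  assumes "n \<ge> 1"
  shows "lagp g n = lagp (g + 1) n - lagp (g + 1) (n - 1)"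
proof (rule poly_eqI)
  fix k
  show "coeff (lagp g n) k = coeff (lagp (g + 1) n - lagp (g + 1) (n - 1)) k"
  proof (cases "k < n")
    case False
    then have "k = n \<or> k > n" by auto
    then show ?thesis using assms by (auto simp: cf_def)
  next
    case True
    then obtain r where n: "n = k + 1 + r" by (metis Suc_eq_plus1 le_Suc_ex Suc_leI)
    have e1: "pochhammer (g + real k + 1) (Suc r) = (g + real k + 1) * pochhammer (g + real k + 2) r"
      by (simp add: pochhammer_rec add_ac)
    have e2: "pochhammer (g + real k + 2) (Suc r) = (g + real k + 2 + real r) * pochhammer (g + real k + 2) r"
      by (simp add: pochhammer_rec' add_ac)
    have jk: "n - k = Suc r" "n - 1 - k = r" using n by auto
    show ?thesis
      apply (simp add: cf_def jk)
      apply (simp add: n add_ac e1[simplified add_ac] e2[simplified add_ac])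
      apply (simp add: divide_simps)
      apply (simp add: algebra_simps)
      done
  qed
qed

lemma pderiv_lagp_Suc: "pderiv (lagp g (Suc j)) = - lagp (g + 1) j"
proof (rule poly_eqI)
  fix k
  show "coeff (pderiv (lagp g (Suc j))) k = coeff (- lagp (g + 1) j) k"
  proof (cases "k \<le> j")
    case False then show ?thesis by (simp add: cf_def coeff_pderiv)
  next
    case True
    then obtain r where n: "j = k + r" by (metis le_Suc_ex)
    have jk: "j - k = r" using n by auto
    show ?thesis
      by (simp add: cf_def coeff_pderiv jk n add_ac divide_simps)
  qed
qed

lemma pderiv_lagp_0: "pderiv (lagp g 0) = 0"
  by (simp add: lagp_def monom_0 pderiv_pCons)

lemma pderiv_pow_monom_lagp:
  "(pderiv^^i) (monom 1 i * lagp (real i) j) = smult (pochhammer (real j + 1) i) (lagp 0 j)"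
proof (rule poly_eqI)
  fix k
  show "coeff ((pderiv^^i) (monom 1 i * lagp (real i) j)) k = coeff (smult (pochhammer (real j + 1) i) (lagp 0 j)) k"
  proof (cases "k \<le> j")
    case False then show ?thesis by (simp add: cf_def coeff_pderiv_pow coeff_monom_mult)
  next
    case True
    then obtain r where n: "j = k + r" by (metis le_Suc_ex)
    have jk: "j - k = r" using n by auto
    have a: "pochhammer (real k + 1) (i + r) = pochhammer (real k + 1) i * pochhammer (real i + real k + 1) r"
      by (subst pochhammer_product') (simp add: add_ac)
    have b: "pochhammer (real k + 1) (r + i) = pochhammer (real k + 1) r * pochhammer (real j + 1) i"
      by (subst pochhammer_product') (simp add: add_ac n)
    have c: "pochhammer (1 + real k) i * pochhammer (1 + (real i + real k)) r =
      pochhammer (1 + real k) r * pochhammer (1 + (real k + real r)) i"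
    proof -
      have "pochhammer (1 + real k) i * pochhammer (1 + (real i + real k)) r = pochhammer (real k + 1) (i + r)"
        unfolding a by (simp add: add_ac)
      also have "\<dots> = pochhammer (real k + 1) (r + i)" by (simp add: add.commute)
      also have "\<dots> = pochhammer (1 + real k) r * pochhammer (1 + (real k + real r)) i"
        unfolding b by (simp add: add_ac n)
      finally show ?thesis .
    qed
    show ?thesis
      using c by (simp add: cf_def coeff_pderiv_pow coeff_monom_mult jk n add_ac)
  qed
qed

lemma final_coeff_main:
  fixes \<alpha> i r n :: nat
  assumes n: "n = i + 2 + r"
  defines "D \<equiv> pochhammer (real n + 1) \<alpha>"
  shows "pochhammer (real n + 1) (\<alpha>+1) * cf (real \<alpha> + 3) (n - 1) i
       - pochhammer (real n) (\<alpha>+1) * cf (real \<alpha> + 3) (n - 2) i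
       + pochhammer (real n) (\<alpha>+2) * cf (real \<alpha>) n (Suc i)
       = pochhammer (real n + 1) \<alpha> * (real \<alpha> + 1) * (real \<alpha> + 2) * cf (real \<alpha> + 2) (n - 1) (Suc i)"
proof -
  define a where "a = real \<alpha>"
  define G where "G = pochhammer (a + real i + 3) r"
  define H where "H = pochhammer (a + real i + 4) r"
  have pos: "a + real i + 3 > 0" unfolding a_def by simp
  have "pochhammer (a + real i + 3) (Suc r) = (a + real i + 3) * H"
    unfolding H_def by (simp add: pochhammer_rec add_ac)
  moreover have "pochhammer (a + real i + 3) (Suc r) = (a + real i + 3 + real r) * G"
    unfolding G_def by (simp add: pochhammer_rec' add_ac)
  ultimately have HG: "H = G * (a + real i + 3 + real r) / (a + real i + 3)"
    using pos by (simp add: field_simps)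
  have c1: "cf (real \<alpha> + 3) (n-1) i = (-1)^i * ((a + real i + 4 + real r) * H) / (fact (Suc r) * fact i)"
  proof -
    have "n - 1 - i = Suc r" "i \<le> n - 1" using n by auto
    then show ?thesis unfolding cf_def H_def a_def
      by (simp add: pochhammer_rec' add_ac)
  qed
  have c2: "cf (real \<alpha> + 3) (n-2) i = (-1)^i * H / (fact r * fact i)"
  proof -
    have "n - 2 - i = r" "i \<le> n - 2" using n by auto
    then show ?thesis unfolding cf_def H_def a_def
      by (simp add: add_ac)
  qed
  have c3: "cf (real \<alpha>) n (Suc i) = (-1)^Suc i * ((a + real i + 2) * G) / (fact (Suc r) * fact (Suc i))"
  proof -
    have "n - Suc i = Suc r" "Suc i \<le> n" using n by auto
    then show ?thesis unfolding cf_def G_def a_def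
      by (simp add: pochhammer_rec add_ac)
  qed
  have c4: "cf (real \<alpha> + 2) (n-1) (Suc i) = (-1)^Suc i * H / (fact r * fact (Suc i))"
  proof -
    have "n - 1 - Suc i = r" "Suc i \<le> n - 1" using n by auto
    then show ?thesis unfolding cf_def H_def a_def
      by (simp add: add_ac)
  qed
  have A: "pochhammer (real n + 1) (\<alpha>+1) = D * (real n + 1 + a)"
    unfolding D_def a_def by (simp add: pochhammer_rec')
  have B: "pochhammer (real n) (\<alpha>+1) = real n * D"
    unfolding D_def by (simp add: pochhammer_rec)
  have P: "pochhammer (real n) (\<alpha>+2) = real n * (D * (real n + 1 + a))"
  proof -
    have "pochhammer (real n) (\<alpha>+2) = real n * pochhammer (real n + 1) (\<alpha>+1)"
      using pochhammer_rec[of "real n" "\<alpha>+1"] by simp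
    then show ?thesis using A by simp
  qed
  have rn: "real n = real i + 2 + real r" using n by simp
  show ?thesis
    unfolding c1 c2 c3 c4 A B P D_def[symmetric]
    unfolding HG rn a_def[symmetric]
    using pos
    apply (simp add: divide_simps)
    apply (simp add: algebra_simps)
    done
qed

lemma final_poly:
  fixes \<alpha> n :: nat
  assumes "n \<ge> 1"
  shows "pCons 0 (smult (pochhammer (real n + 1) (\<alpha>+1)) (lagp (real \<alpha> + 3) (n-1))
           - smult (if n \<ge> 2 then pochhammer (real n) (\<alpha>+1) else 0) (lagp (real \<alpha> + 3) (n-2)))
         + smult (pochhammer (real n) (\<alpha>+2)) (lagp (real \<alpha>) n)
       = smult (pochhammer (real n + 1) \<alpha> * (real \<alpha> + 1) * (real \<alpha> + 2)) (lagp (real \<alpha> + 2) (n-1))"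
proof -
  obtain m where n: "n = Suc m" using assms by (cases n) auto
  define D where "D = pochhammer (real n + 1) \<alpha>"
  define a where "a = real \<alpha>"
  have A: "pochhammer (real n + 1) (\<alpha>+1) = D * (real n + 1 + a)"
    unfolding D_def a_def by (simp add: pochhammer_rec')
  have P: "pochhammer (real n) (\<alpha>+2) = real n * (D * (real n + 1 + a))"
  proof -
    have "pochhammer (real n) (\<alpha>+2) = real n * pochhammer (real n + 1) (\<alpha>+1)"
      using pochhammer_rec[of "real n" "\<alpha>+1"] by simp
    then show ?thesis using A by simp
  qed
  show ?thesis
  proof (rule poly_eqI)
    fix k
    show "coeff (pCons 0 (smult (pochhammer (real n + 1) (\<alpha>+1)) (lagp (real \<alpha> + 3) (n-1))
           - smult (if n \<ge> 2 then pochhammer (real n) (\<alpha>+1) else 0) (lagp (real \<alpha> + 3) (n-2)))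
         + smult (pochhammer (real n) (\<alpha>+2)) (lagp (real \<alpha>) n)) k
       = coeff (smult (pochhammer (real n + 1) \<alpha> * (real \<alpha> + 1) * (real \<alpha> + 2)) (lagp (real \<alpha> + 2) (n-1))) k"
    proof (cases k)
      case 0
      have pos: "a + 2 > 0" unfolding a_def by simp
      have "pochhammer (a + 2) (Suc m) = (a + 2) * pochhammer (a + 3) m"
        by (simp add: pochhammer_rec add_ac)
      moreover have "pochhammer (a + 2) (Suc m) = (a + 2 + real m) * pochhammer (a + 2) m"
        by (simp add: pochhammer_rec' add_ac)
      ultimately have e: "pochhammer (a + 3) m = pochhammer (a + 2) m * (a + 2 + real m) / (a + 2)"
        using pos by (simp add: field_simps)
      have c1: "cf (real \<alpha>) n 0 = (a + 1) * pochhammer (a + 2) m / fact (Suc m)"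
        unfolding cf_def a_def n by (simp add: pochhammer_rec add_ac)
      have c2: "cf (real \<alpha> + 2) (n - 1) 0 = pochhammer (a + 3) m / fact m"
        unfolding cf_def a_def n by (simp add: add_ac)
      show ?thesis
        unfolding 0 coeff_add coeff_smult coeff_lagp coeff_pCons_0
        unfolding c1 c2 P D_def[symmetric]
        unfolding e n a_def[symmetric] using pos
        by (simp add: divide_simps)
    next
      case (Suc i)
      consider "i + 2 \<le> n" | "i = m" | "i > m" using n by linarith
      then show ?thesis
      proof cases
        case 1
        then obtain r where nr: "n = i + 2 + r" using le_Suc_ex by blast
        have "n \<ge> 2" using nr by simp
        then show ?thesis using final_coeff_main[OF nr, of \<alpha>]
          by (simp add: Suc algebra_simps)
      next
        case 2
        have z: "(if n \<ge> 2 then pochhammer (real n) (\<alpha>+1) else 0) * cf (real \<alpha> + 3) (n - 2) i = 0"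
          using 2 n by (auto simp: cf_def)
        have c1: "cf (real \<alpha> + 3) (n - 1) i = (-1)^m / fact m" using 2 n by (simp add: cf_def)
        have c2: "cf (real \<alpha>) n (Suc i) = (-1)^Suc m / fact (Suc m)" using 2 n by (simp add: cf_def)
        have c3: "cf (real \<alpha> + 2) (n - 1) (Suc i) = 0" using 2 n by (simp add: cf_def)
        show ?thesis
          unfolding Suc coeff_add coeff_smult coeff_lagp coeff_pCons_Suc coeff_diff z
          unfolding c1 c2 c3
          unfolding A P
          unfolding n
          by (simp add: divide_simps)
      next
        case 3
        then show ?thesis using n by (simp add: Suc cf_def)
      qed
    qed
  qed
qed

lemma ident1_poly:
  fixes \<alpha> m :: nat
  defines "q \<equiv> pCons 0 (lagp (real \<alpha> + 2) m)"
  shows "pCons 0 (pderiv (pderiv q)) + smult (real \<alpha> + 1) (pderiv q) - pCons 0 (pderiv q)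
           + smult (real (Suc m)) q = smult (real \<alpha> + 1) (lagp (real \<alpha> + 2) m)"
proof (rule poly_eqI)
  fix k
  define a where "a = real \<alpha>"
  show "coeff (pCons 0 (pderiv (pderiv q)) + smult (real \<alpha> + 1) (pderiv q) - pCons 0 (pderiv q)
           + smult (real (Suc m)) q) k = coeff (smult (real \<alpha> + 1) (lagp (real \<alpha> + 2) m)) k"
  proof (cases k)
    case 0 then show ?thesis by (simp add: q_def coeff_pderiv)
  next
    case (Suc j)
    consider "j + 1 \<le> m" | "j = m" | "j > m" by linarith
    then show ?thesis
    proof cases
      case 1
      then obtain r where mr: "m = j + 1 + r" using le_Suc_ex by blast
      define H where "H = pochhammer (a + real j + 4) r"
      have d1: "cf (real \<alpha> + 2) m (Suc j) = (-1)^Suc j * H / (fact r * fact (Suc j))"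
      proof -
        have "m - Suc j = r" "Suc j \<le> m" using mr by auto
        then show ?thesis unfolding cf_def H_def a_def by (simp add: add_ac)
      qed
      have d0: "cf (real \<alpha> + 2) m j = (-1)^j * ((a + real j + 3) * H) / (fact (Suc r) * fact j)"
      proof -
        have "m - j = Suc r" "j \<le> m" using mr by auto
        then show ?thesis unfolding cf_def H_def a_def by (simp add: pochhammer_rec add_ac)
      qed
      have rm: "real m = real j + 1 + real r" using mr by simp
      show ?thesis
        unfolding Suc q_def
        apply (simp add: coeff_pderiv)
        unfolding d1 d0
        unfolding rm a_def[symmetric]
        apply (simp add: divide_simps)
        apply (simp add: algebra_simps)
        done
    next
      case 2
      then show ?thesis unfolding Suc q_def by (simp add: coeff_pderiv cf_def algebra_simps)
    next
      case 3
      then show ?thesis unfolding Suc q_def by (simp add: coeff_pderiv cf_def)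
    qed
  qed
qed

lemma inner_poly:
  fixes \<alpha> n :: nat
  assumes "n \<ge> 1"
  shows "(pderiv^^(\<alpha>+2)) (monom 1 (\<alpha>+1) * lagp (real \<alpha>) n)
       = smult (if n \<ge> 2 then pochhammer (real n) (\<alpha>+1) else 0) (lagp 1 (n-2))
         - smult (pochhammer (real n + 1) (\<alpha>+1)) (lagp 1 (n-1))"
proof -
  obtain m where n: "n = Suc m" using assms by (cases n) auto
  have s: "lagp (real \<alpha>) n = lagp (real (\<alpha>+1)) n - lagp (real (\<alpha>+1)) m"
    using lagp_split[of n "real \<alpha>"] n by (simp add: add.commute)
  have "(pderiv^^(\<alpha>+2)) (monom 1 (\<alpha>+1) * lagp (real \<alpha>) n)
      = pderiv ((pderiv^^(\<alpha>+1)) (monom 1 (\<alpha>+1) * lagp (real \<alpha>) n))"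
    by (simp add: numeral_2_eq_2)
  also have "\<dots> = pderiv (smult (pochhammer (real n + 1) (\<alpha>+1)) (lagp 0 n)
                   - smult (pochhammer (real m + 1) (\<alpha>+1)) (lagp 0 m))"
    unfolding s right_diff_distrib pderiv_pow_diff pderiv_pow_monom_lagp by simp
  also have "\<dots> = smult (if n \<ge> 2 then pochhammer (real n) (\<alpha>+1) else 0) (lagp 1 (n-2))
         - smult (pochhammer (real n + 1) (\<alpha>+1)) (lagp 1 (n-1))"
  proof (cases m)
    case 0 then show ?thesis by (simp add: n pderiv_diff pderiv_smult pderiv_lagp_Suc pderiv_lagp_0)
  next
    case (Suc m')
    then show ?thesis by (simp add: n pderiv_diff pderiv_smult pderiv_lagp_Suc add_ac)
  qed
  finally show ?thesis .
qed

lemma fact_tcoef: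
  assumes "n \<ge> 1"
  shows "fact (\<alpha> + 2) * tcoef \<alpha> n = pochhammer (real n + 1) \<alpha> * (real \<alpha> + 2)"
proof -
  obtain m where n: "n = Suc m" using assms by (cases n) auto
  have f1: "fact (\<alpha> + 1 + m) = (fact (\<alpha>+1) * pochhammer (real \<alpha> + 2) m :: real)"
    unfolding pochhammer_fact by (subst pochhammer_product') (simp add: add_ac)
  have f2: "fact (n + \<alpha>) = (fact n * pochhammer (real n + 1) \<alpha> :: real)"
    unfolding pochhammer_fact by (subst pochhammer_product') (simp add: add_ac)
  have e: "n + \<alpha> = \<alpha> + 1 + m" using n by simp
  have "fact (\<alpha> + 2) * tcoef \<alpha> n = (real \<alpha> + 2) * (fact (\<alpha>+1) * pochhammer (real \<alpha> + 2) m) / fact n"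
    unfolding tcoef_def n by (simp add: numeral_2_eq_2 field_simps)
  also have "\<dots> = (real \<alpha> + 2) * fact (n + \<alpha>) / fact n" unfolding f1[symmetric] e ..
  also have "\<dots> = pochhammer (real n + 1) \<alpha> * (real \<alpha> + 2)" unfolding f2 by simp
  finally show ?thesis .
qed

theorem theorem2p3:
  fixes \<alpha> n :: nat and x :: real
  shows "(n \<ge> 1 \<longrightarrow>
      fact (\<alpha> + 2) * (L2op \<alpha> (Tpoly \<alpha> n) x + real n * Tpoly \<alpha> n x)
        = - pochhammer (real n + 1) \<alpha> * (real \<alpha> + 1) * (real \<alpha> + 2)
            * laguerre (real \<alpha> + 2) (n - 1) x
    \<and> Lhigh \<alpha> (laguerre (real \<alpha>) n) x + pochhammer (real n) (\<alpha> + 2) * laguerre (real \<alpha>) n x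
        = pochhammer (real n + 1) \<alpha> * (real \<alpha> + 1) * (real \<alpha> + 2)
            * laguerre (real \<alpha> + 2) (n - 1) x)
    \<and> (n = 0 \<longrightarrow>
      fact (\<alpha> + 2) * (L2op \<alpha> (Tpoly \<alpha> n) x + real n * Tpoly \<alpha> n x) = 0
    \<and> Lhigh \<alpha> (laguerre (real \<alpha>) n) x + pochhammer (real n) (\<alpha> + 2) * laguerre (real \<alpha>) n x = 0)"
proof -
  have lagfun: "laguerre g j = poly (lagp g j)" if "g \<ge> 0" for g j
    using laguerre_poly[OF that] by blast
  have Lh: "Lhigh \<alpha> (laguerre (real \<alpha>) n) x = (-1)^(\<alpha>+1) * x *
      poly ((Eop^^(\<alpha>+2)) ((pderiv^^(\<alpha>+2)) (monom 1 (\<alpha>+1) * lagp (real \<alpha>) n))) x"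
  proof -
    have "(\<lambda>s. s ^ (\<alpha>+1) * laguerre (real \<alpha>) n s) = poly (monom 1 (\<alpha>+1) * lagp (real \<alpha>) n)"
      by (rule ext) (simp add: lagfun poly_monom)
    note eq = this
    show ?thesis
      unfolding Lhigh_def eq Dx_poly Dx_exp_poly by (simp add: exp_minus field_simps)
  qed
  have part1: "n \<ge> 1 \<Longrightarrow> ?thesis"
  proof -
    assume "n \<ge> 1"
    then obtain m where n: "n = Suc m" by (cases n) auto
    define q where "q = pCons 0 (lagp (real \<alpha> + 2) m)"
    have T: "Tpoly \<alpha> n = poly (smult (- tcoef \<alpha> n) q)"
      by (rule ext) (simp add: Tpoly_def q_def n lagfun)
    note id1 = arg_cong[OF ident1_poly[of \<alpha> m], of "\<lambda>p. poly p x"]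
    have e1: "fact (\<alpha> + 2) * (L2op \<alpha> (Tpoly \<alpha> n) x + real n * Tpoly \<alpha> n x)
        = - pochhammer (real n + 1) \<alpha> * (real \<alpha> + 1) * (real \<alpha> + 2) * laguerre (real \<alpha> + 2) (n - 1) x"
    proof -
      have "L2op \<alpha> (Tpoly \<alpha> n) x + real n * Tpoly \<alpha> n x
          = - tcoef \<alpha> n * ((real \<alpha> + 1) * poly (lagp (real \<alpha> + 2) m) x)"
      proof -
        have "x * poly (pderiv (pderiv q)) x + (real \<alpha> + 1 - x) * poly (pderiv q) x + real n * poly q x
            = (real \<alpha> + 1) * poly (lagp (real \<alpha> + 2) m) x"
          using id1 by (simp add: n q_def algebra_simps)
        then have "tcoef \<alpha> n * (x * poly (pderiv (pderiv q)) x + (real \<alpha> + 1 - x) * poly (pderiv q) x + real n * poly q x)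
            = tcoef \<alpha> n * ((real \<alpha> + 1) * poly (lagp (real \<alpha> + 2) m) x)" by simp
        then show ?thesis
          unfolding L2op_def T Dx_poly
          by (simp add: numeral_2_eq_2 pderiv_smult pderiv_minus algebra_simps)
      qed
      then have "fact (\<alpha> + 2) * (L2op \<alpha> (Tpoly \<alpha> n) x + real n * Tpoly \<alpha> n x)
          = - (fact (\<alpha> + 2) * tcoef \<alpha> n) * ((real \<alpha> + 1) * poly (lagp (real \<alpha> + 2) m) x)"
        by simp
      also have "\<dots> = - pochhammer (real n + 1) \<alpha> * (real \<alpha> + 1) * (real \<alpha> + 2) * laguerre (real \<alpha> + 2) (n - 1) x"
        unfolding fact_tcoef[OF \<open>n \<ge> 1\<close>] by (simp add: lagfun n)
      finally show ?thesis .
    qed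
    have e2: "Lhigh \<alpha> (laguerre (real \<alpha>) n) x + pochhammer (real n) (\<alpha> + 2) * laguerre (real \<alpha>) n x
        = pochhammer (real n + 1) \<alpha> * (real \<alpha> + 1) * (real \<alpha> + 2) * laguerre (real \<alpha> + 2) (n - 1) x"
    proof -
      note fp = arg_cong[OF final_poly[OF \<open>n \<ge> 1\<close>, of \<alpha>], of "\<lambda>p. poly p x"]
      have r3: "1 + real (\<alpha> + 2) = real \<alpha> + 3" by simp
      show ?thesis
        unfolding Lh inner_poly[OF \<open>n \<ge> 1\<close>] Eop_pow_diff Eop_pow_smult Eop_pow_lagp r3
        using fp by (simp add: lagfun algebra_simps)
    qed
    show ?thesis using e1 e2 n by simp
  qed
  have part0: "n = 0 \<Longrightarrow> ?thesis"
  proof -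
    assume n: "n = 0"
    have T: "Tpoly \<alpha> n = poly 0" by (rule ext) (simp add: Tpoly_def n)
    have z: "(pderiv^^(\<alpha>+2)) (monom 1 (\<alpha>+1) * lagp (real \<alpha>) 0) = 0"
      apply (rule poly_eqI)
      apply (subst coeff_pderiv_pow)
      apply (simp add: coeff_monom_mult cf_def)
      done
    have p0: "pochhammer (0::real) (\<alpha> + 2) = 0" by (simp add: pochhammer_0_left)
    show ?thesis
      using Lh[unfolded n z Eop_pow_zero] p0 unfolding n
      by (simp add: L2op_def T[unfolded n] Dx_poly)
  qed
  show ?thesis using part0 part1 by (cases "n = 0") auto
qed
end
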